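(* Let $\mathcal X=(\Omega,S)$ be an antisymmetric primitive schurian scheme and let $r\in S$ be a non-reflexive basic relation such that $|[r]^{r}_2\cup[r]^{r^*}_2|>2n_r/3$ and $[r]^{r^*}_2\ne\emptyset$. Then $b(\mathcal X)\le 2$.
   Context: A coherent configuration on a finite set $\Omega$ is $\mathcal X=(\Omega,S)$ with $S$ a partition of $\Omega\times\Omega$ such that $1_\Omega$ is a union of elements of $S$, $s^*=\{(\beta,\alpha):(\alpha,\beta)\in s\}\in S$ for $s\in S$, and for $r,s,t\in S$ the number $c_{rs}^t=|\{\gamma:(\alpha,\gamma)\in r,(\gamma,\beta)\in s\}|$ is independent of $(\alpha,\beta)\in t$. It is a scheme if $1_\Omega\in S$; then the valency $n_r=|\{\beta:(\alpha,\beta)\in r\}|$ is independent of $\alpha$. A scheme is primitive if the only equivalence relations on $\Omega$ that are unions of elements of $S$ are $1_\Omega$ and $\Omega^2$. It is antisymmetric if every $s\in S$ with $s=s^*$ lies in $1_\Omega$; schurian if $S$ is the set of orbits on $\Omega\times\Omega$ of some permutation group on $\Omega$. For $r,s\in S$, $r^*s$ denotes the set of elements of $S$ contained in $r^*\cdot s=\{(\alpha,\beta):\exists\gamma,(\alpha,\gamma)\in r^*,(\gamma,\beta)\in s\}$, and for an integer $m\ge0$, $[r]^s_m=\{t\in r^*s: c_{rt}^s\le m\}$. A set $B\subseteq\Omega$ is a base of $\mathcal X$ if the smallest coherent configuration on $\Omega$ whose relations (unions of basic relations) contain those of $\mathcal X$ and in which each $\{\beta\}$, $\beta\in B$, is a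 fiber (i.e. $1_{\{\beta\}}$ is basic) is complete (all basic relations singletons); $b(\mathcal X)$ is the minimal size of a base. *)

theory Defs
  imports Complex_Main "HOL-Combinatorics.Permutations"
begin

definition union_of :: "('a \<times> 'a) set set \<Rightarrow> ('a \<times> 'a) set \<Rightarrow> bool" where
  "union_of S X \<longleftrightarrow> (\<exists>T \<subseteq> S. X = \<Union>T)"

definition coherent_config :: "'a set \<Rightarrow> ('a \<times> 'a) set set \<Rightarrow> bool" where
  "coherent_config Om S \<longleftrightarrow>
     finite Om \<and>
     \<comment> \<open>S is a partition of Om \<times> Om\<close>
     (\<forall>s\<in>S. s \<noteq> {}) \<and> \<Union>S = Om \<times> Om \<and>
     (\<forall>s\<in>S. \<forall>s'\<in>S. s \<noteq> s' \<longrightarrow> s \<inter> s' = {}) \<and>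
     union_of S (Id_on Om) \<and>
     (\<forall>s\<in>S. converse s \<in> S) \<and>
     (\<forall>r\<in>S. \<forall>s\<in>S. \<forall>t\<in>S. \<forall>p\<in>t. \<forall>q\<in>t.
        card {g. (fst p, g) \<in> r \<and> (g, snd p) \<in> s} =
        card {g. (fst q, g) \<in> r \<and> (g, snd q) \<in> s})"

definition scheme :: "'a set \<Rightarrow> ('a \<times> 'a) set set \<Rightarrow> bool" where
  "scheme Om S \<longleftrightarrow> coherent_config Om S \<and> Id_on Om \<in> S"

text \<open>Valency n_r (independent of the chosen point in a scheme).\<close>
definition valency :: "'a set \<Rightarrow> ('a \<times> 'a) set \<Rightarrow> nat" where
  "valency Om r = card {b. ((SOME a. a \<in> Om), b) \<in> r}"

definition inum :: "('a \<times> 'a) set \<Rightarrow> ('a \<times> 'a) set \<Rightarrow> ('a \<times> 'a) set \<Rightarrow> nat" where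
  "inum r s t = (let p = (SOME p. p \<in> t) in card {g. (fst p, g) \<in> r \<and> (g, snd p) \<in> s})"

definition primitive :: "'a set \<Rightarrow> ('a \<times> 'a) set set \<Rightarrow> bool" where
  "primitive Om S \<longleftrightarrow>
     (\<forall>E. equiv Om E \<and> union_of S E \<longrightarrow> E = Id_on Om \<or> E = Om \<times> Om)"

definition antisymmetric :: "'a set \<Rightarrow> ('a \<times> 'a) set set \<Rightarrow> bool" where
  "antisymmetric Om S \<longleftrightarrow> (\<forall>s\<in>S. s = converse s \<longrightarrow> s \<subseteq> Id_on Om)"

definition perm_group_on :: "'a set \<Rightarrow> ('a \<Rightarrow> 'a) set \<Rightarrow> bool" where
  "perm_group_on Om G \<longleftrightarrow> (\<forall>f\<in>G. f permutes Om) \<and> id \<in> G \<and>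
     (\<forall>f\<in>G. \<forall>g\<in>G. f \<circ> g \<in> G) \<and> (\<forall>f\<in>G. inv f \<in> G)"

definition schurian :: "'a set \<Rightarrow> ('a \<times> 'a) set set \<Rightarrow> bool" where
  "schurian Om S \<longleftrightarrow> (\<exists>G. perm_group_on Om G \<and>
     S = {{(f a, f b) | f. f \<in> G} | a b. a \<in> Om \<and> b \<in> Om})"

definition rstar_s :: "('a \<times> 'a) set set \<Rightarrow> ('a \<times> 'a) set \<Rightarrow> ('a \<times> 'a) set \<Rightarrow> ('a \<times> 'a) set set" where
  "rstar_s S r s = {t \<in> S. t \<subseteq> converse r O s}"

text \<open>[r]^s_m = {t in r^* s. c_{rt}^s \<le> m}\<close>
definition bracket :: "('a \<times> 'a) set set \<Rightarrow> ('a \<times> 'a) set \<Rightarrow> ('a \<times> 'a) set \<Rightarrow> nat \<Rightarrow> ('a \<times> 'a) set set" where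
  "bracket S r s m = {t \<in> rstar_s S r s. inum r t s \<le> m}"

definition extends :: "('a \<times> 'a) set set \<Rightarrow> ('a \<times> 'a) set set \<Rightarrow> bool" where
  "extends T S \<longleftrightarrow> (\<forall>s\<in>S. union_of T s)"

definition complete_config :: "'a set \<Rightarrow> ('a \<times> 'a) set set \<Rightarrow> bool" where
  "complete_config Om T \<longleftrightarrow> (\<forall>t\<in>T. card t = 1)"

definition admissible :: "'a set \<Rightarrow> ('a \<times> 'a) set set \<Rightarrow> 'a set \<Rightarrow> ('a \<times> 'a) set set \<Rightarrow> bool" where
  "admissible Om S B T \<longleftrightarrow> coherent_config Om T \<and> extends T S \<and>
     (\<forall>b\<in>B. Id_on {b} \<in> T)"

definition is_base :: "'a set \<Rightarrow> ('a \<times> 'a) set set \<Rightarrow> 'a set \<Rightarrow> bool" where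
  "is_base Om S B \<longleftrightarrow> B \<subseteq> Om \<and>
     (\<exists>T. admissible Om S B T \<and> (\<forall>T'. admissible Om S B T' \<longrightarrow> extends T' T) \<and>
          complete_config Om T)"

definition base_number :: "'a set \<Rightarrow> ('a \<times> 'a) set set \<Rightarrow> nat" where
  "base_number Om S = (LEAST k. \<exists>B. is_base Om S B \<and> card B = k)"

end

theory Submission
  imports Defs
begin

lemma cc_finite: "coherent_config Om S \<Longrightarrow> finite Om"
  by (simp add: coherent_config_def)

lemma cc_props1: assumes "coherent_config Om S" shows "\<forall>s\<in>S. s \<noteq> {}"
  using assms unfolding coherent_config_def by (elim conjE)

lemma cc_props2: assumes "coherent_config Om S" shows "\<Union>S = Om \<times> Om"
  using assms unfolding coherent_config_def by (elim conjE)

lemma cc_props3: assumes "coherent_config Om S" shows "\<forall>s\<in>S. \<forall>s'\<in>S. s \<noteq> s' \<longrightarrow> s \<inter> s' = {}"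
  using assms unfolding coherent_config_def by (elim conjE)

lemma cc_props4: assumes "coherent_config Om S" shows "union_of S (Id_on Om)"
  using assms unfolding coherent_config_def by (elim conjE)

lemma cc_props5: assumes "coherent_config Om S" shows "\<forall>s\<in>S. converse s \<in> S"
  using assms unfolding coherent_config_def by (elim conjE)

lemma cc_props6: assumes "coherent_config Om S" shows "\<forall>r\<in>S. \<forall>s\<in>S. \<forall>t\<in>S. \<forall>p\<in>t. \<forall>q\<in>t.
        card {g. (fst p, g) \<in> r \<and> (g, snd p) \<in> s} =
        card {g. (fst q, g) \<in> r \<and> (g, snd q) \<in> s}"
  using assms unfolding coherent_config_def by (elim conjE)

lemma cc_sub: "coherent_config Om S \<Longrightarrow> s \<in> S \<Longrightarrow> s \<subseteq> Om \<times> Om"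
  using cc_props2[of Om S] by (metis Union_upper)

lemma cc_cover: "coherent_config Om S \<Longrightarrow> p \<in> Om \<times> Om \<Longrightarrow> \<exists>s\<in>S. p \<in> s"
  using cc_props2[of Om S] by (metis UnionE)

lemma cc_disj: "coherent_config Om S \<Longrightarrow> s \<in> S \<Longrightarrow> s' \<in> S \<Longrightarrow> p \<in> s \<Longrightarrow> p \<in> s' \<Longrightarrow> s = s'"
  using cc_props3[of Om S] by (metis disjoint_iff)

lemma cc_conv: "coherent_config Om S \<Longrightarrow> s \<in> S \<Longrightarrow> converse s \<in> S"
  using cc_props5[of Om S] by metis

lemma cc_ne: "coherent_config Om S \<Longrightarrow> s \<in> S \<Longrightarrow> s \<noteq> {}"
  using cc_props1[of Om S] by metis

lemma cc_IdU: "coherent_config Om S \<Longrightarrow> union_of S (Id_on Om)"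
  using cc_props4[of Om S] by metis

lemma cc_coh:
  assumes "coherent_config Om S" "r \<in> S" "s \<in> S" "t \<in> S" "(a,b) \<in> t" "(c,d) \<in> t"
  shows "card {g. (a,g) \<in> r \<and> (g,b) \<in> s} = card {g. (c,g) \<in> r \<and> (g,d) \<in> s}"
proof -
  have "card {g. (fst (a,b), g) \<in> r \<and> (g, snd (a,b)) \<in> s} = card {g. (fst (c,d), g) \<in> r \<and> (g, snd (c,d)) \<in> s}"
    using cc_props6[OF assms(1)] assms(2-6) by blast
  then show ?thesis by simp
qed

lemma cc_finset: "coherent_config Om S \<Longrightarrow> r \<in> S \<Longrightarrow> finite {g. (a,g) \<in> r \<and> P g}"
  by (rule finite_subset[of _ Om]) (use cc_sub cc_finite in blast)+

lemma cc_finset2: "coherent_config Om S \<Longrightarrow> r \<in> S \<Longrightarrow> finite {g. (g,a) \<in> r \<and> P g}"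
  by (rule finite_subset[of _ Om]) (use cc_sub cc_finite in blast)+

lemma cc_fin0: "coherent_config Om S \<Longrightarrow> r \<in> S \<Longrightarrow> finite {g. (g,a) \<in> r}"
  using cc_finset2[of Om S r a "\<lambda>_. True"] by simp

lemma cc_fin1: "coherent_config Om S \<Longrightarrow> r \<in> S \<Longrightarrow> finite {g. (a,g) \<in> r}"
  using cc_finset[of Om S r a "\<lambda>_. True"] by simp

lemma union_of_piece:
  assumes "union_of T u" "p \<in> u" shows "\<exists>e\<in>T. p \<in> e \<and> e \<subseteq> u"
  using assms unfolding union_of_def by blast

lemma card_transfer:
  assumes "card A = card B" "a \<in> A" "finite A" shows "B \<noteq> {}"
proof -
  have "card A > 0" using assms(2,3) by (auto simp: card_gt_0_iff)
  then have "card B > 0" using assms(1) by linarith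
  then show ?thesis by auto
qed

lemma fiber_lemma:
  assumes cT: "coherent_config Om T" and ext: "extends T S" and cS: "coherent_config Om S"
    and IdS: "Id_on Om \<in> S" and anti: "antisymmetric Om S"
    and x: "Id_on {x} \<in> T" and y: "Id_on {y} \<in> T" and u: "u \<in> S" and v: "v \<in> S"
    and P: "card {z. (x,z) \<in> u \<and> (z,y) \<in> v} \<le> 2" and zu: "(x,z) \<in> u" and zv: "(z,y) \<in> v"
  shows "Id_on {z} \<in> T"
proof -
  have finOm: "finite Om" using cT by (rule cc_finite)
  have zOm: "z \<in> Om" using cc_sub[OF cS u] zu by auto
  obtain f where f: "f \<in> T" "(z,z) \<in> f" using cc_cover[OF cT, of "(z,z)"] zOm by auto
  have fId: "f \<subseteq> Id_on Om"
  proof -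
    have "union_of T (Id_on Om)" using cT by (rule cc_IdU)
    from union_of_piece[OF this, of "(z,z)"] zOm obtain e where "e \<in> T" "(z,z) \<in> e" "e \<subseteq> Id_on Om"
      by auto
    with cc_disj[OF cT f(1) \<open>e \<in> T\<close> f(2)] show ?thesis by simp
  qed
  define F where "F = {w. (w,w) \<in> f}"
  have f_eq: "f = Id_on F" using fId unfolding F_def Id_on_def by auto
  have zF: "z \<in> F" using f F_def by auto
  obtain t1 where t1: "t1 \<in> T" "(x,z) \<in> t1" "t1 \<subseteq> u"
    using union_of_piece[of T u "(x,z)"] ext u zu unfolding extends_def by blast
  obtain t2 where t2: "t2 \<in> T" "(z,y) \<in> t2" "t2 \<subseteq> v"
    using union_of_piece[of T v "(z,y)"] ext v zv unfolding extends_def by blast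
  have FP: "F \<subseteq> {z. (x,z) \<in> u \<and> (z,y) \<in> v}"
  proof
    fix w assume "w \<in> F"
    then have wf: "(w,w) \<in> f" by (simp add: F_def)
    have e1: "card {g. (z,g) \<in> converse t1 \<and> (g,z) \<in> t1} = card {g. (w,g) \<in> converse t1 \<and> (g,w) \<in> t1}"
      by (rule cc_coh[OF cT cc_conv[OF cT t1(1)] t1(1) f(1) f(2) wf])
    have "{g. (w,g) \<in> converse t1 \<and> (g,w) \<in> t1} \<noteq> {}"
      by (rule card_transfer[OF e1, of x]) (use t1(2) cc_fin0[OF cT t1(1)] in auto)
    then obtain g where g: "(g,w) \<in> t1" by auto
    have e2: "card {h. (x,h) \<in> Id_on {x} \<and> (h,z) \<in> t1} = card {h. (g,h) \<in> Id_on {x} \<and> (h,w) \<in> t1}"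
      by (rule cc_coh[OF cT x t1(1) t1(1) t1(2) g])
    have "{h. (g,h) \<in> Id_on {x} \<and> (h,w) \<in> t1} \<noteq> {}"
      by (rule card_transfer[OF e2, of x]) (use t1(2) in \<open>auto intro: rev_finite_subset[of "{x}"]\<close>)
    then obtain h where "(g,h) \<in> Id_on {x}" by auto
    then have "g = x" by auto
    with g t1 have xw: "(x,w) \<in> u" by auto
    have e3: "card {g. (z,g) \<in> t2 \<and> (g,z) \<in> converse t2} = card {g. (w,g) \<in> t2 \<and> (g,w) \<in> converse t2}"
      by (rule cc_coh[OF cT t2(1) cc_conv[OF cT t2(1)] f(1) f(2) wf])
    have "{g. (w,g) \<in> t2 \<and> (g,w) \<in> converse t2} \<noteq> {}"
      by (rule card_transfer[OF e3, of y]) (use t2(2) cc_fin1[OF cT t2(1)] in auto)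
    then obtain g' where g': "(w,g') \<in> t2" by auto
    have e4: "card {h. (z,h) \<in> t2 \<and> (h,y) \<in> Id_on {y}} = card {h. (w,h) \<in> t2 \<and> (h,g') \<in> Id_on {y}}"
      by (rule cc_coh[OF cT t2(1) y t2(1) t2(2) g'])
    have "{h. (w,h) \<in> t2 \<and> (h,g') \<in> Id_on {y}} \<noteq> {}"
      by (rule card_transfer[OF e4, of y]) (use t2(2) in \<open>auto intro: rev_finite_subset[of "{y}"]\<close>)
    then obtain h where "(h,g') \<in> Id_on {y}" by auto
    then have "g' = y" by auto
    with g' t2 have wy: "(w,y) \<in> v" by auto
    show "w \<in> {z. (x,z) \<in> u \<and> (z,y) \<in> v}" using xw wy by simp
  qed
  have finP: "finite {z. (x,z) \<in> u \<and> (z,y) \<in> v}" by (rule cc_finset[OF cS u])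
  have cF: "card F \<le> 2" using card_mono[OF finP FP] P by simp
  have finF: "finite F" using finite_subset[OF FP finP] .
  show ?thesis
  proof (cases "F = {z}")
    case True then show ?thesis using f f_eq by simp
  next
    case False
    then obtain w where wF: "w \<in> F" "w \<noteq> z" using zF by auto
    have wOm: "w \<in> Om" using wF fId F_def by auto
    obtain t3 where t3: "t3 \<in> T" "(z,w) \<in> t3" using cc_cover[OF cT, of "(z,w)"] zOm wOm by auto
    obtain s where s: "s \<in> S" "(z,w) \<in> s" using cc_cover[OF cS, of "(z,w)"] zOm wOm by auto
    obtain e where e: "e \<in> T" "(z,w) \<in> e" "e \<subseteq> s"
      using union_of_piece[of T s "(z,w)"] ext s unfolding extends_def by blast
    have "e = t3" using cc_disj[OF cT e(1) t3(1) e(2) t3(2)] .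
    with e have t3s: "t3 \<subseteq> s" by simp
    have wf: "(w,w) \<in> f" using wF F_def by simp
    have e5: "card {g. (w,g) \<in> converse t3 \<and> (g,w) \<in> t3} = card {g. (z,g) \<in> converse t3 \<and> (g,z) \<in> t3}"
      by (rule cc_coh[OF cT cc_conv[OF cT t3(1)] t3(1) f(1) wf f(2)])
    have "{g. (z,g) \<in> converse t3 \<and> (g,z) \<in> t3} \<noteq> {}"
      by (rule card_transfer[OF e5, of z]) (use t3(2) cc_fin0[OF cT t3(1)] in auto)
    then obtain g where g: "(g,z) \<in> t3" by auto
    have e6: "card {h. (z,h) \<in> f \<and> (h,w) \<in> t3} = card {h. (g,h) \<in> f \<and> (h,z) \<in> t3}"
      by (rule cc_coh[OF cT f(1) t3(1) t3(1) t3(2) g])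
    have "{h. (g,h) \<in> f \<and> (h,z) \<in> t3} \<noteq> {}"
      by (rule card_transfer[OF e6, of z]) (use f(2) t3(2) cc_fin1[OF cT f(1)] in auto)
    then obtain h where "(g,h) \<in> f" by auto
    then have gF: "g \<in> F" using f_eq by auto
    have "g = z \<or> g = w"
    proof (rule ccontr)
      assume "\<not> (g = z \<or> g = w)"
      then have "{g, z, w} \<subseteq> F" "card {g,z,w} = 3" using gF zF wF by auto
      then show False using card_mono[OF finF, of "{g,z,w}"] cF by simp
    qed
    then show ?thesis
    proof
      assume "g = z"
      then have "(z,z) \<in> s" using g t3s by auto
      then have "s = Id_on Om" using cc_disj[OF cS s(1) IdS] zOm by auto
      then show ?thesis using s wF by auto
    next
      assume "g = w"
      then have "(z,w) \<in> converse s" using g t3s by auto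
      then have "converse s = s" using cc_disj[OF cS cc_conv[OF cS s(1)] s(1)] s(2) by auto
      then have "s \<subseteq> Id_on Om" using anti s(1) unfolding antisymmetric_def by auto
      then show ?thesis using s wF by auto
    qed
  qed
qed



locale ctx =
  fixes Om :: "'a set" and S :: "('a \<times> 'a) set set" and G :: "('a \<Rightarrow> 'a) set" and r :: "('a \<times> 'a) set"
  assumes sch: "scheme Om S" and anti: "antisymmetric Om S" and prim: "primitive Om S"
    and grp: "perm_group_on Om G"
    and Sdef: "S = {{(f a, f b) | f. f \<in> G} | a b. a \<in> Om \<and> b \<in> Om}"
    and rS: "r \<in> S" and rnId: "r \<noteq> Id_on Om"
    and big: "real (card (bracket S r r 2 \<union> bracket S r (converse r) 2)) > 2 * real (valency Om r) / 3"
    and D2ne: "bracket S r (converse r) 2 \<noteq> {}"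
begin

abbreviation "D1 \<equiv> bracket S r r 2"
abbreviation "D2 \<equiv> bracket S r (converse r) 2"

lemma cS: "coherent_config Om S" using sch by (simp add: scheme_def)
lemma IdS: "Id_on Om \<in> S" using sch by (simp add: scheme_def)
lemma finOm: "finite Om" using cc_finite[OF cS] .
lemma rsub: "r \<subseteq> Om \<times> Om" using cc_sub[OF cS rS] .
lemma rcS: "converse r \<in> S" using cc_conv[OF cS rS] .

lemma G_perm: "f \<in> G \<Longrightarrow> f permutes Om" using grp by (simp add: perm_group_on_def)
lemma G_comp: "f \<in> G \<Longrightarrow> g \<in> G \<Longrightarrow> f \<circ> g \<in> G" using grp by (simp add: perm_group_on_def)
lemma G_inv: "f \<in> G \<Longrightarrow> inv f \<in> G" using grp by (simp add: perm_group_on_def)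
lemma G_id: "id \<in> G" using grp by (simp add: perm_group_on_def)

lemma S_orb: "s \<in> S \<Longrightarrow> \<exists>a b. s = {(f a, f b) | f. f \<in> G}"
  using Sdef by blast

lemma G_pres: assumes "s \<in> S" "(p,q) \<in> s" "f \<in> G" shows "(f p, f q) \<in> s"
proof -
  obtain a b where s: "s = {(f a, f b) | f. f \<in> G}" using S_orb[OF assms(1)] by blast
  then obtain f1 where "f1 \<in> G" "p = f1 a" "q = f1 b" using assms(2) by auto
  then have "(f p, f q) = ((f \<circ> f1) a, (f \<circ> f1) b)" "f \<circ> f1 \<in> G" using G_comp assms(3) by auto
  then show ?thesis using s by blast
qed

lemma G_trans2: assumes "s \<in> S" "(x,y) \<in> s" "(x',y') \<in> s"
  shows "\<exists>g\<in>G. g x = x' \<and> g y = y'"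
proof -
  obtain a b where s: "s = {(f a, f b) | f. f \<in> G}" using S_orb[OF assms(1)] by blast
  then obtain f1 where f1: "f1 \<in> G" "x = f1 a" "y = f1 b" using assms(2) by auto
  obtain f2 where f2: "f2 \<in> G" "x' = f2 a" "y' = f2 b" using assms(3) s by auto
  have p1: "f1 permutes Om" using G_perm f1(1) .
  let ?g = "f2 \<circ> inv f1"
  have "?g \<in> G" using G_comp[OF f2(1) G_inv[OF f1(1)]] .
  moreover have "?g x = x'" "?g y = y'" using f1 f2 permutes_inverses(2)[OF p1] by auto
  ultimately show ?thesis by blast
qed

lemma G_inj: "f \<in> G \<Longrightarrow> inj f" by (rule permutes_inj[OF G_perm])

lemma G_in: "f \<in> G \<Longrightarrow> (f a \<in> Om) = (a \<in> Om)" by (rule permutes_in_image[OF G_perm])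

lemma inum_at: assumes "s \<in> S" "(a,b) \<in> s" "u \<in> S" "t \<in> S"
  shows "inum u t s = card {g. (a,g) \<in> u \<and> (g,b) \<in> t}"
proof -
  let ?p = "SOME p. p \<in> s"
  have "?p \<in> s" using assms(2) by (rule someI)
  then obtain c d where cd: "?p = (c,d)" "(c,d) \<in> s" by (metis surj_pair)
  have "inum u t s = card {g. (c,g) \<in> u \<and> (g,d) \<in> t}" unfolding inum_def Let_def cd(1) by simp
  also have "\<dots> = card {g. (a,g) \<in> u \<and> (g,b) \<in> t}" by (rule cc_coh[OF cS assms(3,4,1) cd(2) assms(2)])
  finally show ?thesis .
qed

lemma D1D: "t \<in> D1 \<Longrightarrow> t \<in> S \<and> t \<subseteq> converse r O r \<and> inum r t r \<le> 2"
  by (simp add: bracket_def rstar_s_def)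
lemma D2D: "t \<in> D2 \<Longrightarrow> t \<in> S \<and> t \<subseteq> converse r O converse r \<and> inum r t (converse r) \<le> 2"
  by (simp add: bracket_def rstar_s_def)

lemma pos1: assumes "t \<in> D1" "(x,y) \<in> r" shows "\<exists>z. (x,z) \<in> r \<and> (z,y) \<in> t"
proof -
  have t: "t \<in> S" "t \<subseteq> converse r O r" using D1D[OF assms(1)] by auto
  obtain a b where ab: "(a,b) \<in> t" using cc_ne[OF cS t(1)] by auto
  then obtain c where c: "(c,a) \<in> r" "(c,b) \<in> r" using t(2) by blast
  have e: "card {g. (c,g) \<in> r \<and> (g,b) \<in> t} = card {g. (x,g) \<in> r \<and> (g,y) \<in> t}"
    by (rule cc_coh[OF cS rS t(1) rS c(2) assms(2)])
  have "{g. (x,g) \<in> r \<and> (g,y) \<in> t} \<noteq> {}"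
    by (rule card_transfer[OF e, of a]) (use c ab cc_fin1[OF cS rS, of c] in \<open>auto intro: rev_finite_subset\<close>)
  then show ?thesis by auto
qed

lemma pos2: assumes "t \<in> D2" "(v,x) \<in> r" shows "\<exists>z. (x,z) \<in> r \<and> (z,v) \<in> t"
proof -
  have t: "t \<in> S" "t \<subseteq> converse r O converse r" using D2D[OF assms(1)] by auto
  obtain a b where ab: "(a,b) \<in> t" using cc_ne[OF cS t(1)] by auto
  then obtain c where c: "(c,a) \<in> r" "(b,c) \<in> r" using t(2) by blast
  have e: "card {g. (c,g) \<in> r \<and> (g,b) \<in> t} = card {g. (x,g) \<in> r \<and> (g,v) \<in> t}"
    by (rule cc_coh[OF cS rS t(1) rcS]) (use c assms(2) in auto)
  have "{g. (x,g) \<in> r \<and> (g,v) \<in> t} \<noteq> {}"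
    by (rule card_transfer[OF e, of a]) (use c ab cc_fin1[OF cS rS, of c] in \<open>auto intro: rev_finite_subset\<close>)
  then show ?thesis by auto
qed

end

lemma card_rel:
  assumes "finite Om" "R \<subseteq> Om \<times> Om" "\<forall>x\<in>Om. card {z. (x,z) \<in> R} = k"
  shows "card R = card Om * k"
proof -
  have RS: "R = Sigma Om (\<lambda>x. {z. (x,z) \<in> R})" using assms(2) by auto
  have "\<forall>x\<in>Om. finite {z. (x,z) \<in> R}"
  proof
    fix x show "finite {z. (x,z) \<in> R}" by (rule finite_subset[OF _ assms(1)]) (use assms(2) in blast)
  qed
  then have "card (Sigma Om (\<lambda>x. {z. (x,z) \<in> R})) = (\<Sum>x\<in>Om. card {z. (x,z) \<in> R})"
    using assms(1) by (intro card_SigmaI) auto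
  then have "card R = (\<Sum>x\<in>Om. card {z. (x,z) \<in> R})" using RS by metis
  also have "\<dots> = (\<Sum>x\<in>Om. k)" using assms(3) by simp
  finally show ?thesis by simp
qed

context ctx begin

lemma finr: "finite r" by (rule finite_subset[OF rsub]) (simp add: finOm)

lemma rne: "r \<noteq> {}" using cc_ne[OF cS rS] .

lemma cardr_pos: "card r > 0" using finr rne by (simp add: card_gt_0_iff)

lemma dc: assumes t: "t \<in> S" and xv: "(x,v) \<in> r"
  shows "card {w. (w,x) \<in> r \<and> (v,w) \<in> t} = inum r t (converse r)"
proof -
  define c1 where "c1 = card {w. (w,x) \<in> r \<and> (v,w) \<in> t}"
  define c2 where "c2 = inum r t (converse r)"
  have tc: "converse t \<in> S" using cc_conv[OF cS t] .
  have C1: "card {w. (w,p) \<in> r \<and> (q,w) \<in> t} = c1" if "(p,q) \<in> r" for p q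
  proof -
    have "card {w. (p,w) \<in> converse r \<and> (w,q) \<in> converse t} = card {w. (x,w) \<in> converse r \<and> (w,v) \<in> converse t}"
      by (rule cc_coh[OF cS rcS tc rS that xv])
    then show ?thesis unfolding c1_def by simp
  qed
  have C2: "card {g. (a,g) \<in> r \<and> (g,b) \<in> t} = c2" if "(a,b) \<in> converse r" for a b
    unfolding c2_def using inum_at[OF rcS that rS t] by simp
  define X1 where "X1 = Sigma r (\<lambda>p. {w. (w, fst p) \<in> r \<and> (snd p, w) \<in> t})"
  define X2 where "X2 = Sigma (converse r) (\<lambda>q. {g. (fst q, g) \<in> r \<and> (g, snd q) \<in> t})"
  have fin1: "\<forall>p\<in>r. finite {w. (w, fst p) \<in> r \<and> (snd p, w) \<in> t}"
    by (simp add: cc_finset2[OF cS rS])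
  have fin2: "\<forall>q\<in>converse r. finite {g. (fst q, g) \<in> r \<and> (g, snd q) \<in> t}"
    by (simp add: cc_finset[OF cS rS])
  have "card X1 = (\<Sum>p\<in>r. card {w. (w, fst p) \<in> r \<and> (snd p, w) \<in> t})"
    unfolding X1_def using finr fin1 by (rule card_SigmaI)
  also have "\<dots> = (\<Sum>p\<in>r. c1)" by (rule sum.cong[OF refl]) (use C1 in auto)
  finally have k1: "card X1 = card r * c1" by simp
  have "card X2 = (\<Sum>q\<in>converse r. card {g. (fst q, g) \<in> r \<and> (g, snd q) \<in> t})"
    unfolding X2_def using finr fin2 by (intro card_SigmaI) auto
  also have "\<dots> = (\<Sum>q\<in>converse r. c2)" by (rule sum.cong[OF refl]) (use C2 in auto)
  finally have k2: "card X2 = card r * c2" by simp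
  define phi where "phi = (\<lambda>((a::'a,b::'a),c::'a). ((a,c),b))"
  have "inj_on phi X1" unfolding phi_def inj_on_def by auto
  moreover have "phi ` X1 = X2"
  proof
    show "phi ` X1 \<subseteq> X2" unfolding phi_def X1_def X2_def by auto
    show "X2 \<subseteq> phi ` X1"
    proof
      fix e assume "e \<in> X2"
      then obtain a b g where e: "e = ((a,b),g)" "(b,a) \<in> r" "(a,g) \<in> r" "(g,b) \<in> t"
        unfolding X2_def by auto
      then have "((a,g),b) \<in> X1" unfolding X1_def by auto
      moreover have "phi ((a,g),b) = e" unfolding phi_def e by simp
      ultimately show "e \<in> phi ` X1" by (metis imageI)
    qed
  qed
  ultimately have "card X1 = card X2" by (metis card_image)
  then have "card r * c1 = card r * c2" using k1 k2 by simp
  then have "c1 = c2" using cardr_pos by simp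
  then show ?thesis unfolding c1_def c2_def .
qed

lemma val1: assumes "x \<in> Om" shows "card {z. (x,z) \<in> r} = valency Om r"
proof -
  let ?a = "SOME a. a \<in> Om"
  have a: "?a \<in> Om" using assms by (rule someI)
  have "card {g. (?a,g) \<in> r \<and> (g,?a) \<in> converse r} = card {g. (x,g) \<in> r \<and> (g,x) \<in> converse r}"
    by (rule cc_coh[OF cS rS rcS IdS]) (use a assms in auto)
  then show ?thesis unfolding valency_def by simp
qed

lemma val2: assumes "x \<in> Om" shows "card {z. (z,x) \<in> r} = valency Om r"
proof -
  obtain a where a: "a \<in> Om" using assms by blast
  define k where "k = card {z. (z,a) \<in> r}"
  have K: "card {z. (y,z) \<in> converse r} = k" if "y \<in> Om" for y
  proof -
    have "card {g. (y,g) \<in> converse r \<and> (g,y) \<in> r} = card {g. (a,g) \<in> converse r \<and> (g,a) \<in> r}"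
      by (rule cc_coh[OF cS rcS rS IdS]) (use a that in auto)
    then show ?thesis unfolding k_def by simp
  qed
  have c1: "card r = card Om * valency Om r"
    by (rule card_rel[OF finOm rsub]) (use val1 in auto)
  have c2: "card (converse r) = card Om * k"
    by (rule card_rel[OF finOm]) (use rsub K in auto)
  have "card Om > 0" using finOm assms by (auto simp: card_gt_0_iff)
  then have "k = valency Om r" using c1 c2 by simp
  moreover have "card {z. (z,x) \<in> r} = k" using K[OF assms] by simp
  ultimately show ?thesis by simp
qed

lemma le2_1: assumes "t \<in> D1" "(x,v) \<in> r" shows "card {z. (x,z) \<in> r \<and> (z,v) \<in> t} \<le> 2"
  using inum_at[OF rS assms(2) rS, of t] D1D[OF assms(1)] by simp

lemma le2_2: assumes "t \<in> D2" "(v,x) \<in> r" shows "card {z. (x,z) \<in> r \<and> (z,v) \<in> t} \<le> 2"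
  using inum_at[OF rcS _ rS, of x v t] assms(2) D2D[OF assms(1)] by simp

lemma le2_3: assumes "t \<in> D2" "(x,v) \<in> r"
  shows "card {w. (x,w) \<in> converse r \<and> (w,v) \<in> converse t} \<le> 2"
  using dc[OF _ assms(2), of t] D2D[OF assms(1)] by simp

lemma pos3: assumes "t \<in> D2" "(x,v) \<in> r" shows "\<exists>w. (w,x) \<in> r \<and> (v,w) \<in> t"
proof -
  have tS: "t \<in> S" using D2D[OF assms(1)] by simp
  obtain p q where pq: "(p,q) \<in> r" using rne by auto
  obtain z where z: "(q,z) \<in> r" "(z,p) \<in> t" using pos2[OF assms(1) pq] by auto
  have "inum r t (converse r) = card {g. (q,g) \<in> r \<and> (g,p) \<in> t}"
    by (rule inum_at[OF rcS _ rS tS]) (use pq in simp)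
  also have "\<dots> > 0" using z cc_finset[OF cS rS, of q "\<lambda>g. (g,p) \<in> t"] by (auto simp: card_gt_0_iff)
  finally have "card {w. (w,x) \<in> r \<and> (v,w) \<in> t} > 0" using dc[OF tS assms(2)] by simp
  then show ?thesis by (auto simp: card_gt_0_iff)
qed

end

context ctx begin

inductive_set cl :: "'a \<Rightarrow> 'a \<Rightarrow> 'a set" for x y where
  cl_base: "y \<in> cl x y"
| cl_r1: "\<lbrakk>v \<in> cl x y; (x,v) \<in> r; (x,z) \<in> r; t \<in> D1; (z,v) \<in> t\<rbrakk> \<Longrightarrow> z \<in> cl x y"
| cl_r2: "\<lbrakk>v \<in> cl x y; (v,x) \<in> r; (x,z) \<in> r; t \<in> D2; (z,v) \<in> t\<rbrakk> \<Longrightarrow> z \<in> cl x y"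
| cl_r3: "\<lbrakk>v \<in> cl x y; (x,v) \<in> r; (w,x) \<in> r; t \<in> D2; (v,w) \<in> t\<rbrakk> \<Longrightarrow> w \<in> cl x y"

lemma cl_sound:
  assumes cT: "coherent_config Om T" and ext: "extends T S"
    and x: "Id_on {x} \<in> T" and y: "Id_on {y} \<in> T" and v: "v \<in> cl x y"
  shows "Id_on {v} \<in> T"
  using v
proof (induction rule: cl.induct)
  case cl_base then show ?case using y .
next
  case (cl_r1 v z t)
  show ?case
    by (rule fiber_lemma[OF cT ext cS IdS anti x cl_r1.IH rS _ le2_1[OF cl_r1.hyps(4,2)] cl_r1.hyps(3,5)])
      (use D1D[OF cl_r1.hyps(4)] in simp)
next
  case (cl_r2 v z t)
  show ?case
    by (rule fiber_lemma[OF cT ext cS IdS anti x cl_r2.IH rS _ le2_2[OF cl_r2.hyps(4,2)] cl_r2.hyps(3,5)])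
      (use D2D[OF cl_r2.hyps(4)] in simp)
next
  case (cl_r3 v w t)
  have tS: "converse t \<in> S" using cc_conv[OF cS] D2D[OF cl_r3.hyps(4)] by simp
  show ?case
    by (rule fiber_lemma[OF cT ext cS IdS anti x cl_r3.IH rcS tS le2_3[OF cl_r3.hyps(4,2)]])
      (use cl_r3.hyps in auto)
qed

lemma cl_cases: "v \<in> cl x y \<Longrightarrow> v = y \<or> (x,v) \<in> r \<or> (v,x) \<in> r"
  by (induction rule: cl.induct) auto

lemma cl_trans: assumes "v \<in> cl x y" "w \<in> cl x v" shows "w \<in> cl x y"
  using assms(2)
proof (induction rule: cl.induct)
  case cl_base then show ?case using assms(1) .
next
  case (cl_r1 v z t) then show ?case by (blast intro: cl.cl_r1)
next
  case (cl_r2 v z t) then show ?case by (blast intro: cl.cl_r2)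
next
  case (cl_r3 v w t) then show ?case by (blast intro: cl.cl_r3)
qed

lemma cl_equi: assumes f: "f \<in> G" "f x = x" and v: "v \<in> cl x y" shows "f v \<in> cl x (f y)"
  using v
proof (induction rule: cl.induct)
  case cl_base then show ?case by (rule cl.cl_base)
next
  case (cl_r1 v z t)
  have tS: "t \<in> S" using D1D[OF cl_r1.hyps(4)] by simp
  have "(x, f v) \<in> r" "(x, f z) \<in> r" "(f z, f v) \<in> t"
    using G_pres[OF rS cl_r1.hyps(2) f(1)] G_pres[OF rS cl_r1.hyps(3) f(1)] G_pres[OF tS cl_r1.hyps(5) f(1)] f(2) by auto
  then show ?case using cl.cl_r1[OF cl_r1.IH _ _ cl_r1.hyps(4)] by blast
next
  case (cl_r2 v z t)
  have tS: "t \<in> S" using D2D[OF cl_r2.hyps(4)] by simp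
  have "(f v, x) \<in> r" "(x, f z) \<in> r" "(f z, f v) \<in> t"
    using G_pres[OF rS cl_r2.hyps(2) f(1)] G_pres[OF rS cl_r2.hyps(3) f(1)] G_pres[OF tS cl_r2.hyps(5) f(1)] f(2) by auto
  then show ?case using cl.cl_r2[OF cl_r2.IH _ _ cl_r2.hyps(4)] by blast
next
  case (cl_r3 v w t)
  have tS: "t \<in> S" using D2D[OF cl_r3.hyps(4)] by simp
  have "(x, f v) \<in> r" "(f w, x) \<in> r" "(f v, f w) \<in> t"
    using G_pres[OF rS cl_r3.hyps(2) f(1)] G_pres[OF rS cl_r3.hyps(3) f(1)] G_pres[OF tS cl_r3.hyps(5) f(1)] f(2) by auto
  then show ?case using cl.cl_r3[OF cl_r3.IH _ _ cl_r3.hyps(4)] by blast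
qed

lemma cl_img: assumes f: "f \<in> G" "f x = x" shows "f ` cl x y = cl x (f y)"
proof
  show "f ` cl x y \<subseteq> cl x (f y)" using cl_equi[OF f] by blast
  show "cl x (f y) \<subseteq> f ` cl x y"
  proof
    fix w assume w: "w \<in> cl x (f y)"
    have p: "f permutes Om" using G_perm[OF f(1)] .
    have fi: "inv f \<in> G" "inv f x = x" using G_inv[OF f(1)] permutes_inverses(2)[OF p, of x] f(2) by auto
    have "inv f w \<in> cl x (inv f (f y))" using cl_equi[OF fi w] .
    then have "inv f w \<in> cl x y" using permutes_inverses(2)[OF p] by simp
    moreover have "w = f (inv f w)" using permutes_inverses(1)[OF p] by simp
    ultimately show "w \<in> f ` cl x y" by blast
  qed
qed

lemma cl_subOm: assumes "y \<in> Om" shows "cl x y \<subseteq> Om"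
proof
  fix v assume "v \<in> cl x y"
  then show "v \<in> Om" using cl_cases[of v x y] assms rsub by auto
qed

lemma cl_fin: "y \<in> Om \<Longrightarrow> finite (cl x y)"
  using cl_subOm finite_subset finOm by blast

lemma cl_card: assumes "(x,y) \<in> r" "(x,v) \<in> r" shows "card (cl x v) = card (cl x y)"
proof -
  obtain g where g: "g \<in> G" "g x = x" "g y = v" using G_trans2[OF rS assms] by blast
  have "cl x v = g ` cl x y" using cl_img[OF g(1,2), of y] g(3) by simp
  then show ?thesis using card_image[OF inj_on_subset[OF G_inj[OF g(1)]]] by simp
qed

lemma cl_same: assumes "(x,y) \<in> r" "v \<in> cl x y" "(x,v) \<in> r" shows "cl x v = cl x y"
proof -
  have sub: "cl x v \<subseteq> cl x y" using cl_trans[OF assms(2)] by blast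
  have "y \<in> Om" using assms(1) rsub by auto
  then show ?thesis using card_subset_eq[OF cl_fin sub] cl_card[OF assms(1,3)] by simp
qed

lemma cl_meet: assumes "(x,y) \<in> r" "(x,z) \<in> r" "v \<in> cl x y" "v \<in> cl x z"
  shows "cl x y = cl x z"
proof -
  have "v = y \<or> (x,v) \<in> r \<or> (v,x) \<in> r" using cl_cases[OF assms(3)] .
  then have "(x,v) \<in> r \<or> (v,x) \<in> r" using assms(1) by auto
  then show ?thesis
  proof
    assume xv: "(x,v) \<in> r"
    show ?thesis using cl_same[OF assms(1,3) xv] cl_same[OF assms(2,4) xv] by simp
  next
    assume vx: "(v,x) \<in> r"
    obtain t where t: "t \<in> D2" using D2ne by auto
    obtain z' where z': "(x,z') \<in> r" "(z',v) \<in> t" using pos2[OF t vx] by auto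
    have "z' \<in> cl x v" using cl.cl_r2[OF cl.cl_base vx z'(1) t z'(2)] .
    then have "z' \<in> cl x y" "z' \<in> cl x z" using cl_trans assms(3,4) by blast+
    then show ?thesis using cl_same[OF assms(1) _ z'(1)] cl_same[OF assms(2) _ z'(1)] by metis
  qed
qed

lemma cl_big1: assumes xy: "(x,y) \<in> r" shows "card D1 \<le> card (cl x y \<inter> {z. (x,z) \<in> r})"
proof -
  define ch where "ch t = (SOME z. (x,z) \<in> r \<and> (z,y) \<in> t)" for t
  have ch: "(x, ch t) \<in> r \<and> (ch t, y) \<in> t" if "t \<in> D1" for t
    unfolding ch_def using pos1[OF that xy] by (rule someI_ex)
  have "inj_on ch D1"
  proof (rule inj_onI)
    fix t t' assume "t \<in> D1" "t' \<in> D1" "ch t = ch t'"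
    then show "t = t'" using ch[of t] ch[of t'] cc_disj[OF cS] D1D by metis
  qed
  moreover have "ch ` D1 \<subseteq> cl x y \<inter> {z. (x,z) \<in> r}"
    using ch cl.cl_r1[OF cl.cl_base xy] by blast
  moreover have "finite (cl x y \<inter> {z. (x,z) \<in> r})" using cl_fin xy rsub by auto
  ultimately show ?thesis by (rule card_inj_on_le)
qed

lemma cl_big2: assumes xy: "(x,y) \<in> r" shows "card D2 \<le> card (cl x y \<inter> {z. (z,x) \<in> r})"
proof -
  define ch where "ch t = (SOME w. (w,x) \<in> r \<and> (y,w) \<in> t)" for t
  have ch: "(ch t, x) \<in> r \<and> (y, ch t) \<in> t" if "t \<in> D2" for t
    unfolding ch_def using pos3[OF that xy] by (rule someI_ex)
  have "inj_on ch D2"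
  proof (rule inj_onI)
    fix t t' assume "t \<in> D2" "t' \<in> D2" "ch t = ch t'"
    then show "t = t'" using ch[of t] ch[of t'] cc_disj[OF cS] D2D by metis
  qed
  moreover have "ch ` D2 \<subseteq> cl x y \<inter> {z. (z,x) \<in> r}"
    using ch cl.cl_r3[OF cl.cl_base xy] by blast
  moreover have "finite (cl x y \<inter> {z. (z,x) \<in> r})" using cl_fin xy rsub by auto
  ultimately show ?thesis by (rule card_inj_on_le)
qed

end

context ctx begin

lemma three:
  assumes y: "(x,y1) \<in> r" "(x,y2) \<in> r" "(x,y3) \<in> r"
    and d: "cl x y1 \<inter> cl x y2 = {}" "cl x y1 \<inter> cl x y3 = {}" "cl x y2 \<inter> cl x y3 = {}"
  shows False
proof -
  have xOm: "x \<in> Om" using y(1) rsub by auto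
  let ?n = "valency Om r"
  let ?R1 = "{z. (x,z) \<in> r}" and ?R2 = "{z. (z,x) \<in> r}"
  have fin1: "finite ?R1" using cc_fin1[OF cS rS] .
  have fin2: "finite ?R2" using cc_fin0[OF cS rS] .
  define A1 where "A1 = cl x y1 \<inter> ?R1"
  define A2 where "A2 = cl x y2 \<inter> ?R1"
  define A3 where "A3 = cl x y3 \<inter> ?R1"
  define B1 where "B1 = cl x y1 \<inter> ?R2"
  define B2 where "B2 = cl x y2 \<inter> ?R2"
  define B3 where "B3 = cl x y3 \<inter> ?R2"
  have fA: "finite A1" "finite A2" "finite A3" unfolding A1_def A2_def A3_def using fin1 by auto
  have fB: "finite B1" "finite B2" "finite B3" unfolding B1_def B2_def B3_def using fin2 by auto
  have "A1 \<inter> A2 = {}" "(A1 \<union> A2) \<inter> A3 = {}" using d unfolding A1_def A2_def A3_def by blast+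
  then have "card (A1 \<union> A2 \<union> A3) = card A1 + card A2 + card A3"
    using fA by (simp add: card_Un_disjoint)
  moreover have "card (A1 \<union> A2 \<union> A3) \<le> card ?R1"
    by (rule card_mono[OF fin1]) (auto simp: A1_def A2_def A3_def)
  moreover have "card D1 \<le> card A1" "card D1 \<le> card A2" "card D1 \<le> card A3"
    unfolding A1_def A2_def A3_def using cl_big1 y by auto
  ultimately have a: "3 * card D1 \<le> ?n" using val1[OF xOm] by linarith
  have "B1 \<inter> B2 = {}" "(B1 \<union> B2) \<inter> B3 = {}" using d unfolding B1_def B2_def B3_def by blast+
  then have "card (B1 \<union> B2 \<union> B3) = card B1 + card B2 + card B3"
    using fB by (simp add: card_Un_disjoint)
  moreover have "card (B1 \<union> B2 \<union> B3) \<le> card ?R2"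
    by (rule card_mono[OF fin2]) (auto simp: B1_def B2_def B3_def)
  moreover have "card D2 \<le> card B1" "card D2 \<le> card B2" "card D2 \<le> card B3"
    unfolding B1_def B2_def B3_def using cl_big2 y by auto
  ultimately have b: "3 * card D2 \<le> ?n" using val2[OF xOm] by linarith
  have "card (D1 \<union> D2) \<le> card D1 + card D2" by (rule card_Un_le)
  then have "3 * card (D1 \<union> D2) \<le> 2 * ?n" using a b by linarith
  then have "3 * real (card (D1 \<union> D2)) \<le> 2 * real ?n" by linarith
  then show False using big by linarith
qed

lemma no_invol: assumes h: "h \<in> G" "h \<circ> h = id" shows "h = id"
proof (rule ccontr)
  assume "h \<noteq> id"
  then obtain a where a: "h a \<noteq> a" by (auto simp: fun_eq_iff)
  have p: "h permutes Om" using G_perm[OF h(1)] .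
  have aOm: "a \<in> Om" using a permutes_not_in[OF p] by blast
  have bOm: "h a \<in> Om" using G_in[OF h(1)] aOm by simp
  define s where "s = {(f a, f (h a)) | f. f \<in> G}"
  have sS: "s \<in> S" unfolding Sdef s_def using aOm bOm by blast
  have ab: "(a, h a) \<in> s" unfolding s_def by (rule CollectI, rule exI[of _ id]) (simp add: G_id)
  have "h (h a) = a" using h(2) by (metis comp_apply id_apply)
  then have ba: "(h a, a) \<in> s" unfolding s_def using h(1) by force
  have "converse s = s" using cc_disj[OF cS cc_conv[OF cS sS] sS, of "(h a, a)"] ab ba by auto
  then have "s \<subseteq> Id_on Om" using anti sS unfolding antisymmetric_def by auto
  then show False using ab a by auto
qed

lemma pow_G: "g \<in> G \<Longrightarrow> g ^^ k \<in> G"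
  by (induction k) (auto simp: G_id G_comp)

lemma fin_order: assumes g: "g \<in> G" shows "\<exists>m>0. g ^^ m = id"
proof -
  have "range (\<lambda>k. g ^^ k) \<subseteq> {p. p permutes Om}" using pow_G[OF g] G_perm by auto
  then have "finite (range (\<lambda>k. g ^^ k))" using finite_permutations[OF finOm] finite_subset by blast
  then have "\<not> inj (\<lambda>k::nat. g ^^ k)" using finite_imageD infinite_UNIV_nat by blast
  then obtain i j where ij: "i \<noteq> j" "g ^^ i = g ^^ j" unfolding inj_def by blast
  have "\<exists>i j. i < j \<and> g ^^ i = g ^^ j"
    using ij by (metis linorder_neqE_nat)
  then obtain i j where ij: "i < j" "g ^^ i = g ^^ j" by blast
  have p: "g ^^ i permutes Om" using G_perm[OF pow_G[OF g]] .
  have "g ^^ j = g ^^ (j - i) \<circ> g ^^ i" using ij(1) by (simp add: funpow_add[symmetric])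
  then have e: "g ^^ (j - i) \<circ> g ^^ i = g ^^ i" using ij(2) by simp
  have "g ^^ (j - i) = id"
  proof
    fix a
    have "(g ^^ (j - i)) ((g ^^ i) (inv (g ^^ i) a)) = (g ^^ i) (inv (g ^^ i) a)"
      using e by (metis comp_apply)
    then show "(g ^^ (j - i)) a = id a" using permutes_inverses(1)[OF p] by simp
  qed
  then show ?thesis using ij(1) by (intro exI[of _ "j - i"]) auto
qed

lemma main_cl: assumes xy: "(x,y) \<in> r" shows "{z. (x,z) \<in> r} \<subseteq> cl x y"
proof (rule ccontr)
  assume "\<not> ?thesis"
  then obtain z where xz: "(x,z) \<in> r" and zn: "z \<notin> cl x y" by auto
  have dyz: "cl x y \<inter> cl x z = {}"
  proof (rule ccontr)
    assume "cl x y \<inter> cl x z \<noteq> {}"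
    then have "cl x y = cl x z" using cl_meet[OF xy xz] by blast
    then show False using zn cl.cl_base[of z x] by simp
  qed
  obtain g where g: "g \<in> G" "g x = x" "g y = z" using G_trans2[OF rS xy xz] by blast
  have i1: "g ` cl x y = cl x z" using cl_img[OF g(1,2), of y] g(3) by simp
  have xz2: "(x, g z) \<in> r" using G_pres[OF rS xz g(1)] g(2) by simp
  have i2: "g ` cl x z = cl x (g z)" using cl_img[OF g(1,2)] .
  have injg: "inj g" using G_inj[OF g(1)] .
  have i3: "g ` cl x z = cl x y"
  proof (cases "cl x (g z) \<inter> cl x y = {}")
    case False
    then show ?thesis using i2 cl_meet[OF xz2 xy] by blast
  next
    case c1: True
    show ?thesis
    proof (cases "cl x (g z) \<inter> cl x z = {}")
      case False
      then have "cl x (g z) = cl x z" using cl_meet[OF xz2 xz] by blast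
      then have "g ` cl x z = g ` cl x y" using i1 i2 by simp
      then have "cl x z = cl x y" using injg by (simp add: inj_image_eq_iff)
      then show ?thesis using zn cl.cl_base[of z x] by simp
    next
      case True
      have False by (rule three[OF xy xz xz2 dyz]) (use c1 True in auto)
      then show ?thesis ..
    qed
  qed
  have pw: "(g ^^ k) ` cl x y = (if even k then cl x y else cl x z)" for k
  proof (induction k)
    case 0 then show ?case by simp
  next
    case (Suc k)
    have "(g ^^ Suc k) ` cl x y = g ` ((g ^^ k) ` cl x y)" by (simp add: image_comp)
    then show ?case using Suc i1 i3 by auto
  qed
  define m where "m = (LEAST m. 0 < m \<and> g ^^ m = id)"
  have m: "0 < m \<and> g ^^ m = id" unfolding m_def using fin_order[OF g(1)] by (rule LeastI_ex)
  have mmin: "\<not> (0 < k \<and> g ^^ k = id)" if "k < m" for k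
    using not_less_Least[of k "\<lambda>m. 0 < m \<and> g ^^ m = id"] that unfolding m_def by blast
  have "even m"
  proof (rule ccontr)
    assume "odd m"
    then have "cl x y = cl x z" using pw[of m] m by simp
    then show False using zn cl.cl_base[of z x] by simp
  qed
  define h where "h = g ^^ (m div 2)"
  have e2: "m div 2 + m div 2 = m" using \<open>even m\<close> by auto
  have "h \<circ> h = g ^^ (m div 2 + m div 2)" unfolding h_def by (simp only: funpow_add)
  then have "h \<circ> h = g ^^ m" by (simp only: e2)
  then have hh: "h \<circ> h = id" using m by (simp only:)
  have hG: "h \<in> G" unfolding h_def by (rule pow_G[OF g(1)])
  have "h = id" by (rule no_invol[OF hG hh])
  moreover have "0 < m div 2" "m div 2 < m" using m \<open>even m\<close> by auto
  ultimately show False using mmin[of "m div 2"] unfolding h_def by simp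
qed

end

context ctx begin

lemma step_all:
  assumes cT: "coherent_config Om T" and ext: "extends T S"
    and x: "Id_on {x} \<in> T" and y: "Id_on {y} \<in> T" and xy: "(x,y) \<in> r" and xz: "(x,z) \<in> r"
  shows "Id_on {z} \<in> T"
proof -
  have "z \<in> cl x y" using main_cl[OF xy] xz by blast
  then show ?thesis by (rule cl_sound[OF cT ext x y])
qed

lemma step_succ:
  assumes cT: "coherent_config Om T" and ext: "extends T S"
    and x: "Id_on {x} \<in> T" and w: "Id_on {w} \<in> T" and wx: "(w,x) \<in> r"
  shows "\<exists>z. (x,z) \<in> r \<and> Id_on {z} \<in> T"
proof -
  obtain t where t: "t \<in> D2" using D2ne by auto
  obtain z where z: "(x,z) \<in> r" "(z,w) \<in> t" using pos2[OF t wx] by auto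
  have "z \<in> cl x w" using cl.cl_r2[OF cl.cl_base wx z(1) t z(2)] .
  then have "Id_on {z} \<in> T" by (rule cl_sound[OF cT ext x w])
  then show ?thesis using z by blast
qed

lemma reach:
  assumes cT: "coherent_config Om T" and ext: "extends T S"
    and a: "Id_on {a} \<in> T" and b: "Id_on {b} \<in> T" and ab: "(a,b) \<in> r"
    and z: "(a,z) \<in> r\<^sup>*"
  shows "Id_on {z} \<in> T \<and> (\<exists>z'. (z,z') \<in> r \<and> Id_on {z'} \<in> T)"
  using z
proof (induction rule: rtrancl_induct)
  case base then show ?case using a b ab by blast
next
  case (step y z)
  then obtain y' where y': "(y,y') \<in> r" "Id_on {y'} \<in> T" by blast
  have zT: "Id_on {z} \<in> T" using step_all[OF cT ext _ y'(2) y'(1) step.hyps(2)] step.IH by blast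
  have "\<exists>z'. (z,z') \<in> r \<and> Id_on {z'} \<in> T" using step_succ[OF cT ext zT _ step.hyps(2)] step.IH by blast
  then show ?case using zT by blast
qed

lemma G_rt: assumes "f \<in> G" "(a,c) \<in> r\<^sup>*" shows "(f a, f c) \<in> r\<^sup>*"
  using assms(2)
proof (induction rule: rtrancl_induct)
  case base then show ?case by simp
next
  case (step y z)
  then show ?case using G_pres[OF rS step.hyps(2) assms(1)] by (meson rtrancl.rtrancl_into_rtrancl)
qed

definition "Rr a = {c \<in> Om. (a,c) \<in> r\<^sup>*}"

lemma Rr_card: assumes "a \<in> Om" "b \<in> Om" shows "card (Rr a) \<le> card (Rr b)"
proof -
  obtain g where g: "g \<in> G" "g a = b" using G_trans2[OF IdS, of a a b b] assms by auto
  have "g ` Rr a \<subseteq> Rr b" unfolding Rr_def using G_rt[OF g(1)] G_in[OF g(1)] g(2) by auto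
  moreover have "finite (Rr b)" unfolding Rr_def using finOm by auto
  moreover have "inj_on g (Rr a)" by (rule inj_on_subset[OF G_inj[OF g(1)]]) simp
  ultimately show ?thesis by (metis card_inj_on_le)
qed

lemma connected: assumes "a \<in> Om" "z \<in> Om" shows "(a,z) \<in> r\<^sup>*"
proof -
  define E where "E = r\<^sup>* \<inter> (Om \<times> Om)"
  have symE: "(c,a') \<in> E" if "(a',c) \<in> E" for a' c
  proof -
    have ac: "a' \<in> Om" "c \<in> Om" "(a',c) \<in> r\<^sup>*" using that E_def by auto
    have "Rr c \<subseteq> Rr a'" unfolding Rr_def using ac(3) by (auto intro: rtrancl_trans)
    moreover have "card (Rr a') \<le> card (Rr c)" using Rr_card ac by simp
    moreover have "finite (Rr a')" unfolding Rr_def using finOm by auto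
    ultimately have "Rr c = Rr a'" using card_seteq by blast
    moreover have "a' \<in> Rr a'" unfolding Rr_def using ac by simp
    ultimately show ?thesis unfolding E_def Rr_def using ac by auto
  qed
  have eq: "equiv Om E"
  proof (rule equivI)
    show "refl_on Om E" unfolding refl_on_def E_def by auto
    show "sym E" unfolding sym_def using symE by blast
    show "trans E" unfolding trans_def E_def by (auto intro: rtrancl_trans)
  qed (auto simp: E_def)
  have un: "union_of S E"
    unfolding union_of_def
  proof (intro exI[of _ "{s \<in> S. s \<subseteq> E}"] conjI)
    show "{s \<in> S. s \<subseteq> E} \<subseteq> S" by blast
    show "E = \<Union>{s \<in> S. s \<subseteq> E}"
    proof
      show "\<Union>{s \<in> S. s \<subseteq> E} \<subseteq> E" by blast
      show "E \<subseteq> \<Union>{s \<in> S. s \<subseteq> E}"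
      proof
        fix p assume pE: "p \<in> E"
        then obtain u v where p: "p = (u,v)" "u \<in> Om" "v \<in> Om" "(u,v) \<in> r\<^sup>*" unfolding E_def by auto
        define s where "s = {(f u, f v) | f. f \<in> G}"
        have sS: "s \<in> S" unfolding Sdef s_def using p by blast
        have ps: "p \<in> s" unfolding s_def p(1) by (rule CollectI, rule exI[of _ id]) (simp add: G_id)
        have "s \<subseteq> E"
        proof
          fix q assume "q \<in> s"
          then obtain f where f: "f \<in> G" "q = (f u, f v)" unfolding s_def by blast
          then show "q \<in> E" unfolding E_def using G_rt[OF f(1) p(4)] G_in[OF f(1)] p by auto
        qed
        then show "p \<in> \<Union>{s \<in> S. s \<subseteq> E}" using sS ps by blast
      qed
    qed
  qed
  have "E = Id_on Om \<or> E = Om \<times> Om" using prim eq un unfolding primitive_def by blast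
  moreover have "E \<noteq> Id_on Om"
  proof
    assume EI: "E = Id_on Om"
    obtain u v where uv: "(u,v) \<in> r" using rne by auto
    then have "(u,v) \<in> E" unfolding E_def using rsub by auto
    then have "(u,u) \<in> r" "(u,u) \<in> Id_on Om" using EI uv by auto
    then have "r = Id_on Om" using cc_disj[OF cS rS IdS] by blast
    then show False using rnId by simp
  qed
  ultimately have "E = Om \<times> Om" by simp
  then show ?thesis unfolding E_def using assms by auto
qed

lemma all_fibers:
  assumes cT: "coherent_config Om T" and ext: "extends T S"
    and a: "Id_on {a} \<in> T" and b: "Id_on {b} \<in> T" and ab: "(a,b) \<in> r" and z: "z \<in> Om"
  shows "Id_on {z} \<in> T"
proof -
  have "a \<in> Om" using ab rsub by auto
  then show ?thesis using reach[OF cT ext a b ab connected] z by blast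
qed

end

lemma complete_of_fibers:
  assumes cT: "coherent_config Om T" and F: "\<forall>z\<in>Om. Id_on {z} \<in> T" and t: "t \<in> T"
  shows "\<exists>p. t = {p}"
proof -
  obtain a b where ab: "(a,b) \<in> t" using cc_ne[OF cT t] by auto
  have abOm: "a \<in> Om" "b \<in> Om" using cc_sub[OF cT t] ab by auto
  have "t \<subseteq> {(a,b)}"
  proof
    fix q assume q: "q \<in> t"
    obtain c d where cd: "q = (c,d)" by (cases q)
    have e1: "card {g. (a,g) \<in> Id_on {a} \<and> (g,b) \<in> t} = card {g. (c,g) \<in> Id_on {a} \<and> (g,d) \<in> t}"
      by (rule cc_coh[OF cT _ t t ab]) (use F abOm q cd in auto)
    have "{g. (c,g) \<in> Id_on {a} \<and> (g,d) \<in> t} \<noteq> {}"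
      by (rule card_transfer[OF e1, of a]) (use ab in \<open>auto intro: rev_finite_subset[of "{a}"]\<close>)
    then have ca: "c = a" by auto
    have e2: "card {g. (a,g) \<in> t \<and> (g,b) \<in> Id_on {b}} = card {g. (c,g) \<in> t \<and> (g,d) \<in> Id_on {b}}"
      by (rule cc_coh[OF cT t _ t ab]) (use F abOm q cd in auto)
    have "{g. (c,g) \<in> t \<and> (g,d) \<in> Id_on {b}} \<noteq> {}"
      by (rule card_transfer[OF e2, of b]) (use ab in \<open>auto intro: rev_finite_subset[of "{b}"]\<close>)
    then have "d = b" by auto
    then show "q \<in> {(a,b)}" using ca cd by simp
  qed
  then show ?thesis using ab by blast
qed

lemma discrete_cc:
  assumes "finite Om"
  shows "coherent_config Om {{p} | p. p \<in> Om \<times> Om}"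
  unfolding coherent_config_def
proof (intro conjI)
  show "finite Om" by fact
  show "\<forall>s\<in>{{p} |p. p \<in> Om \<times> Om}. s \<noteq> {}" by auto
  show "\<Union>{{p} |p. p \<in> Om \<times> Om} = Om \<times> Om" by auto
  show "\<forall>s\<in>{{p} |p. p \<in> Om \<times> Om}. \<forall>s'\<in>{{p} |p. p \<in> Om \<times> Om}. s \<noteq> s' \<longrightarrow> s \<inter> s' = {}" by auto
  show "union_of {{p} |p. p \<in> Om \<times> Om} (Id_on Om)"
    unfolding union_of_def by (rule exI[of _ "{{(a,a)} | a. a \<in> Om}"]) auto
  show "\<forall>s\<in>{{p} |p. p \<in> Om \<times> Om}. s\<inverse> \<in> {{p} |p. p \<in> Om \<times> Om}" by auto
  show "\<forall>r\<in>{{p} |p. p \<in> Om \<times> Om}. \<forall>s\<in>{{p} |p. p \<in> Om \<times> Om}. \<forall>t\<in>{{p} |p. p \<in> Om \<times> Om}.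
     \<forall>p\<in>t. \<forall>q\<in>t. card {g. (fst p, g) \<in> r \<and> (g, snd p) \<in> s} = card {g. (fst q, g) \<in> r \<and> (g, snd q) \<in> s}"
    by auto
qed

theorem lemma3p4:
  fixes Om :: "'a set" and S :: "('a \<times> 'a) set set" and r :: "('a \<times> 'a) set"
  assumes "scheme Om S" and "antisymmetric Om S" and "primitive Om S" and "schurian Om S"
    and "r \<in> S" and "r \<noteq> Id_on Om"
    and "real (card (bracket S r r 2 \<union> bracket S r (converse r) 2)) > 2 * real (valency Om r) / 3"
    and "bracket S r (converse r) 2 \<noteq> {}"
  shows "base_number Om S \<le> 2"
proof -
  obtain G where G: "perm_group_on Om G" "S = {{(f a, f b) | f. f \<in> G} | a b. a \<in> Om \<and> b \<in> Om}"
    using assms(4) unfolding schurian_def by blast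
  interpret ctx Om S G r
    by (rule ctx.intro) (use assms G in auto)
  obtain a b where ab: "(a,b) \<in> r" using rne by auto
  have abOm: "a \<in> Om" "b \<in> Om" using ab rsub by auto
  define T0 where "T0 = {{p} | p. p \<in> Om \<times> Om}"
  have cT0: "coherent_config Om T0" unfolding T0_def using discrete_cc[OF finOm] .
  have adm0: "admissible Om S {a,b} T0"
    unfolding admissible_def
  proof (intro conjI)
    show "coherent_config Om T0" by (rule cT0)
    show "extends T0 S" unfolding extends_def
    proof
      fix s assume s: "s \<in> S"
      show "union_of T0 s" unfolding union_of_def
        by (rule exI[of _ "{{p} | p. p \<in> s}"]) (use cc_sub[OF cS s] in \<open>auto simp: T0_def\<close>)
    qed
    show "\<forall>x\<in>{a,b}. Id_on {x} \<in> T0" unfolding T0_def using abOm by auto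
  qed
  have minimal: "extends T' T0" if "admissible Om S {a,b} T'" for T'
  proof -
    have cT: "coherent_config Om T'" and ext: "extends T' S" and fa: "Id_on {a} \<in> T'" and fb: "Id_on {b} \<in> T'"
      using that unfolding admissible_def by auto
    have F: "\<forall>z\<in>Om. Id_on {z} \<in> T'" using all_fibers[OF cT ext fa fb ab] by blast
    show ?thesis unfolding extends_def
    proof
      fix s assume "s \<in> T0"
      then obtain p where p: "s = {p}" "p \<in> Om \<times> Om" unfolding T0_def by blast
      obtain t where t: "t \<in> T'" "p \<in> t" using cc_cover[OF cT p(2)] by blast
      obtain q where "t = {q}" using complete_of_fibers[OF cT F t(1)] by blast
      then have "t = {p}" using t(2) by simp
      then show "union_of T' s" unfolding union_of_def p(1) using t(1) by (intro exI[of _ "{t}"]) auto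
    qed
  qed
  have comp0: "complete_config Om T0" unfolding complete_config_def T0_def by auto
  have "is_base Om S {a,b}"
    unfolding is_base_def using abOm adm0 minimal comp0 by blast
  then have "base_number Om S \<le> card {a,b}"
    unfolding base_number_def by (intro Least_le) blast
  also have "card {a,b} \<le> 2" by (simp add: card_insert_le_m1)
  finally show ?thesis .
qed

end
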